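(* Let $l\ge1$, $n\in\mathbb N$ and $\Delta t>0$ with $\Delta t\,c_n<2$. Then for every initial condition $\rho_0\in B(\mathcal H_n)$ there exists $\rho_\infty\in B(\mathcal H_n)$ with $P_{\{l\}}\rho_\infty P_{\{l\}}=\rho_\infty$ such that $(\mathcal E_1^{\Delta t,n})^p(\rho_0)\to\rho_\infty$ as $p\to\infty$ at a geometric rate, where $P_{\{l\}}$ is the orthogonal projector onto $\mathrm{span}\{|k\rangle:0\le k\le l-1\}$.
   Context: Work in $\mathcal H=\ell^2(\mathbb N)$ with Fock basis $(|k\rangle)_{k\in\mathbb N}$ and annihilation operator $a|k+1\rangle=\sqrt{k+1}|k\rangle$, $a|0\rangle=0$. Fix $l\ge1$. For $n\in\mathbb N$, $\mathcal H_n=\mathrm{span}\{|k\rangle:0\le k\le n\}$ with orthogonal projector $P_n$, and $a^l_n=P_na^lP_n$. Set $c_k=\prod_{j=0}^{l-1}(k-j)$, so that $a^{l\dagger}_na^l_n|k\rangle=c_k|k\rangle$ for $0\le k\le n$. The first-order explicit Euler scheme for the Galerkin-truncated $l$-photon loss equation is $\mathcal E_1^{\Delta t,n}(\rho)=\rho+\Delta t\big(a^l_n\rho a^{l\dagger}_n-\tfrac12(a^{l\dagger}_na^l_n\rho+\rho a^{l\dagger}_na^l_n)\big)$ for $\rho\in B(\mathcal H_n)$. *)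

theory Defs
  imports "Jordan_Normal_Form.Matrix"
begin

text \<open>Operators on H_n = span{|0>,...,|n>} are (n+1)x(n+1) complex matrices in the Fock basis.\<close>

definition c_coef :: "nat \<Rightarrow> nat \<Rightarrow> real" where
  "c_coef l k = (\<Prod>j<l. (real k - real j))"

definition dag :: "complex mat \<Rightarrow> complex mat" where
  "dag A = mat (dim_col A) (dim_row A) (\<lambda>(i,j). cnj (A $$ (j,i)))"

text \<open>a^l_n = P_n a^l P_n : <i| a^l |j> = sqrt(j (j-1) ... (j-l+1)) if i = j - l, else 0.\<close>
definition al_n :: "nat \<Rightarrow> nat \<Rightarrow> complex mat" where
  "al_n l n = mat (n+1) (n+1)
     (\<lambda>(i,j). if j = i + l then complex_of_real (sqrt (\<Prod>m<l. real (j - m))) else 0)"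

text \<open>First-order explicit Euler scheme for the truncated l-photon loss equation.\<close>
definition euler1 :: "nat \<Rightarrow> nat \<Rightarrow> real \<Rightarrow> complex mat \<Rightarrow> complex mat" where
  "euler1 l n dt \<rho> =
     (let A = al_n l n in
      \<rho> + complex_of_real dt \<cdot>\<^sub>m
        (A * \<rho> * dag A - (1/2 :: complex) \<cdot>\<^sub>m (dag A * A * \<rho> + \<rho> * (dag A * A))))"

definition P_low :: "nat \<Rightarrow> nat \<Rightarrow> complex mat" where
  "P_low l n = mat (n+1) (n+1) (\<lambda>(i,j). if i = j \<and> i < l then 1 else 0)"

end

theory Submission
  imports Defs
begin

definition sA :: "nat \<Rightarrow> nat \<Rightarrow> real" where
  "sA l k = sqrt (\<Prod>m<l. real (k - m))"

lemma al_entry: "i < n+1 \<Longrightarrow> j < n+1 \<Longrightarrow>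
   al_n l n $$ (i,j) = (if j = i+l then complex_of_real (sA l j) else 0)"
  by (simp add: al_n_def sA_def)

lemma al_dim[simp]: "dim_row (al_n l n) = n+1" "dim_col (al_n l n) = n+1"
  by (simp_all add: al_n_def)

lemma dag_entry[simp]: "i < dim_col A \<Longrightarrow> j < dim_row A \<Longrightarrow> dag A $$ (i,j) = cnj (A $$ (j,i))"
  "dim_row (dag A) = dim_col A" "dim_col (dag A) = dim_row A"
  by (simp_all add: dag_def)

lemma A_rho: assumes "\<rho> \<in> carrier_mat (n+1) (n+1)" "i < n+1" "k < n+1"
  shows "(al_n l n * \<rho>) $$ (i,k) = (if i + l < n+1 then complex_of_real (sA l (i+l)) * \<rho> $$ (i+l,k) else 0)"
proof -
  have "(al_n l n * \<rho>) $$ (i,k) = (\<Sum>m\<in>{0..<n+1}. al_n l n $$ (i,m) * \<rho> $$ (m,k))"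
    using assms by (simp add: scalar_prod_def)
  also have "\<dots> = (\<Sum>m\<in>{0..<n+1}. (if m = i+l then complex_of_real (sA l (i+l)) * \<rho> $$ (i+l,k) else 0))"
    by (rule sum.cong) (use assms in \<open>auto simp: al_entry\<close>)
  also have "\<dots> = (if i + l < n+1 then complex_of_real (sA l (i+l)) * \<rho> $$ (i+l,k) else 0)"
    by (subst sum.delta) auto
  finally show ?thesis .
qed

lemma rho_Adag: assumes "dim_col \<rho> = n+1" "i < dim_row \<rho>" "j < n+1"
  shows "(\<rho> * dag (al_n l n)) $$ (i,j) = (if j + l < n+1 then \<rho> $$ (i,j+l) * complex_of_real (sA l (j+l)) else 0)"
proof -
  have "(\<rho> * dag (al_n l n)) $$ (i,j) = (\<Sum>m\<in>{0..<n+1}. \<rho> $$ (i,m) * dag (al_n l n) $$ (m,j))"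
    using assms by (simp add: scalar_prod_def)
  also have "\<dots> = (\<Sum>m\<in>{0..<n+1}. (if m = j+l then \<rho> $$ (i,j+l) * complex_of_real (sA l (j+l)) else 0))"
    by (rule sum.cong) (use assms in \<open>auto simp: al_entry\<close>)
  also have "\<dots> = (if j + l < n+1 then \<rho> $$ (i,j+l) * complex_of_real (sA l (j+l)) else 0)"
    by (subst sum.delta) auto
  finally show ?thesis .
qed

lemma c_zero: "i < l \<Longrightarrow> c_coef l i = 0"
  unfolding c_coef_def by (rule prod_zero) auto

lemma sA_sq: "l \<le> i \<Longrightarrow> (sA l i)^2 = c_coef l i"
proof -
  assume "l \<le> i"
  have "(\<Prod>m<l. real (i - m)) = c_coef l i"
    unfolding c_coef_def by (rule prod.cong) (use \<open>l \<le> i\<close> in auto)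
  moreover have "(\<Prod>m<l. real (i - m)) \<ge> 0" by (rule prod_nonneg) auto
  ultimately show ?thesis unfolding sA_def by simp
qed

lemma AdagA_term: assumes "i < n+1" "k < n+1" "m < n+1"
  shows "dag (al_n l n) $$ (i,m) * al_n l n $$ (m,k) = (if m + l = i \<and> m + l = k then complex_of_real ((sA l i)^2) else 0)"
proof -
  have 1: "dag (al_n l n) $$ (i,m) = (if i = m+l then complex_of_real (sA l i) else 0)"
    using assms by (simp add: al_entry)
  have 2: "al_n l n $$ (m,k) = (if k = m+l then complex_of_real (sA l k) else 0)"
    using assms by (simp add: al_entry)
  show ?thesis unfolding 1 2
    by (cases "i = m+l"; cases "k = m+l") (simp_all add: power2_eq_square)
qed

lemma AdagA: assumes "i < n+1" "k < n+1"
  shows "(dag (al_n l n) * al_n l n) $$ (i,k) = (if i = k then complex_of_real (c_coef l i) else 0)"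
proof -
  have "(dag (al_n l n) * al_n l n) $$ (i,k) = (\<Sum>m\<in>{0..<n+1}. dag (al_n l n) $$ (i,m) * al_n l n $$ (m,k))"
    using assms by (simp add: scalar_prod_def)
  also have "\<dots> = (\<Sum>m\<in>{0..<n+1}. (if m + l = i \<and> m + l = k then complex_of_real ((sA l i)^2) else 0))"
    by (rule sum.cong[OF refl], rule AdagA_term) (use assms in auto)
  also have "\<dots> = (if i = k then complex_of_real (c_coef l i) else 0)"
  proof (cases "i = k \<and> l \<le> i")
    case True
    have "(\<Sum>m\<in>{0..<n+1}. (if m + l = i \<and> m + l = k then complex_of_real ((sA l i)^2) else 0))
       = (\<Sum>m\<in>{0..<n+1}. (if m = i - l then complex_of_real ((sA l i)^2) else 0))"
      by (rule sum.cong) (use True in auto)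
    also have "\<dots> = complex_of_real ((sA l i)^2)" using assms by (subst sum.delta) auto
    finally show ?thesis using True sA_sq by simp
  next
    case False
    have "(\<Sum>m\<in>{0..<n+1}. (if m + l = i \<and> m + l = k then complex_of_real ((sA l i)^2) else 0)) = 0"
      by (rule sum.neutral) (use False in auto)
    then show ?thesis using False c_zero by auto
  qed
  finally show ?thesis .
qed

lemma diag_left: assumes "D \<in> carrier_mat m m" and Dd: "\<And>i k. i < m \<Longrightarrow> k < m \<Longrightarrow> D $$ (i,k) = (if i = k then d i else 0)"
  and "dim_row \<rho> = m" "i < m" "j < dim_col \<rho>"
  shows "(D * \<rho>) $$ (i,j) = d i * \<rho> $$ (i,j)"
proof -
  have "(D * \<rho>) $$ (i,j) = (\<Sum>k\<in>{0..<m}. D $$ (i,k) * \<rho> $$ (k,j))"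
    using assms(1,3,4,5) by (simp add: scalar_prod_def)
  also have "\<dots> = (\<Sum>k\<in>{0..<m}. (if k = i then d i * \<rho> $$ (i,j) else 0))"
    by (rule sum.cong) (use assms(4) in \<open>auto simp: Dd\<close>)
  also have "\<dots> = d i * \<rho> $$ (i,j)" using assms(4) by (subst sum.delta) auto
  finally show ?thesis .
qed

lemma diag_right: assumes "D \<in> carrier_mat m m" and Dd: "\<And>i k. i < m \<Longrightarrow> k < m \<Longrightarrow> D $$ (i,k) = (if i = k then d i else 0)"
  and "dim_col \<rho> = m" "i < dim_row \<rho>" "j < m"
  shows "(\<rho> * D) $$ (i,j) = \<rho> $$ (i,j) * d j"
proof -
  have "(\<rho> * D) $$ (i,j) = (\<Sum>k\<in>{0..<m}. \<rho> $$ (i,k) * D $$ (k,j))"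
    using assms(1,3,4,5) by (simp add: scalar_prod_def)
  also have "\<dots> = (\<Sum>k\<in>{0..<m}. (if k = j then \<rho> $$ (i,j) * d j else 0))"
    by (rule sum.cong) (use assms(5) in \<open>auto simp: Dd\<close>)
  also have "\<dots> = \<rho> $$ (i,j) * d j" using assms(5) by (subst sum.delta) auto
  finally show ?thesis .
qed

lemma euler_carrier: assumes "\<rho> \<in> carrier_mat (n+1) (n+1)" shows "euler1 l n dt \<rho> \<in> carrier_mat (n+1) (n+1)"
proof -
  have r: "dim_row \<rho> = n+1" "dim_col \<rho> = n+1" using assms by auto
  show ?thesis unfolding euler1_def Let_def carrier_mat_def
    by (simp only: index_add_mat index_smult_mat index_minus_mat index_mult_mat dag_entry al_dim r mem_Collect_eq)
qed

lemma alg_id: "(r::complex) + complex_of_real dt * (Y - 1/2 * (complex_of_real a * r + r * complex_of_real b))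
   = complex_of_real (1 - dt * (a + b) / 2) * r + complex_of_real dt * Y"
  by (simp add: field_simps)

lemma euler_entry: assumes "\<rho> \<in> carrier_mat (n+1) (n+1)" "i < n+1" "j < n+1"
  shows "euler1 l n dt \<rho> $$ (i,j) =
     complex_of_real (1 - dt * (c_coef l i + c_coef l j) / 2) * \<rho> $$ (i,j)
     + (if i + l < n+1 \<and> j + l < n+1 then complex_of_real (dt * sA l (i+l) * sA l (j+l)) * \<rho> $$ (i+l,j+l) else 0)"
proof -
  let ?A = "al_n l n"
  have Dc: "dag ?A * ?A \<in> carrier_mat (n+1) (n+1)"
    by (simp only: carrier_mat_def mem_Collect_eq index_mult_mat(2,3) dag_entry(2,3) al_dim)
  have D1: "(dag ?A * ?A * \<rho>) $$ (i,j) = complex_of_real (c_coef l i) * \<rho> $$ (i,j)"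
    by (rule diag_left[OF Dc AdagA]) (use assms in auto)
  have D2: "(\<rho> * (dag ?A * ?A)) $$ (i,j) = \<rho> $$ (i,j) * complex_of_real (c_coef l j)"
    by (rule diag_right[OF Dc AdagA]) (use assms in auto)
  have D3: "(?A * \<rho> * dag ?A) $$ (i,j) = (if i + l < n+1 \<and> j + l < n+1 then complex_of_real (sA l (i+l) * sA l (j+l)) * \<rho> $$ (i+l,j+l) else 0)"
  proof -
    have "(?A * \<rho> * dag ?A) $$ (i,j) = (if j + l < n+1 then (?A * \<rho>) $$ (i,j+l) * complex_of_real (sA l (j+l)) else 0)"
      by (rule rho_Adag) (use assms in auto)
    also have "\<dots> = (if i + l < n+1 \<and> j + l < n+1 then complex_of_real (sA l (i+l) * sA l (j+l)) * \<rho> $$ (i+l,j+l) else 0)"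
    proof (cases "j + l < n+1")
      case True
      have "(?A * \<rho>) $$ (i,j+l) = (if i + l < n+1 then complex_of_real (sA l (i+l)) * \<rho> $$ (i+l,j+l) else 0)"
        by (rule A_rho) (use assms True in auto)
      then show ?thesis using True by (simp add: mult.commute mult.left_commute)
    qed simp
    finally show ?thesis .
  qed
  have E: "euler1 l n dt \<rho> $$ (i,j) = \<rho> $$ (i,j) + complex_of_real dt * ((?A * \<rho> * dag ?A) $$ (i,j)
     - (1/2) * ((dag ?A * ?A * \<rho>) $$ (i,j) + (\<rho> * (dag ?A * ?A)) $$ (i,j)))"
  proof -
    have r: "dim_row \<rho> = n+1" "dim_col \<rho> = n+1" using assms by auto
    have ij: "i < n+1" "j < n+1" by fact+
    show ?thesis unfolding euler1_def Let_def
      by (simp only: index_add_mat index_smult_mat index_minus_mat index_mult_mat(2,3) dag_entry(2,3) al_dim r ij)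
  qed
  show ?thesis unfolding E D1 D2 D3 alg_id
    by (cases "i + l < n+1 \<and> j + l < n+1") (auto simp: mult.assoc)
qed

lemma geo1:
  fixes x y :: "nat \<Rightarrow> complex" and lam :: complex
  assumes rec: "\<And>p. x (Suc p) = lam * x p + y p" and lb: "cmod lam \<le> s" and "s < r" "0 \<le> s"
    and yb: "\<And>p. cmod (y p) \<le> C * r^p"
  shows "\<exists>D. \<forall>p. cmod (x p) \<le> D * r^p"
proof -
  define D where "D = max (cmod (x 0)) (C / (r - s))"
  have D0: "D \<ge> 0" unfolding D_def by (simp add: le_max_iff_disj)
  have CD: "C \<le> (r - s) * D"
  proof -
    have "C / (r - s) \<le> D" unfolding D_def by simp
    then show ?thesis using \<open>s < r\<close> by (simp add: divide_le_eq mult.commute)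
  qed
  have rp: "r^p \<ge> 0" for p using \<open>s < r\<close> \<open>0 \<le> s\<close> by simp
  have "cmod (x p) \<le> D * r^p" for p
  proof (induction p)
    case 0 then show ?case unfolding D_def by simp
  next
    case (Suc p)
    have "cmod (x (Suc p)) \<le> cmod lam * cmod (x p) + cmod (y p)"
      unfolding rec by (metis norm_mult norm_triangle_ineq)
    also have "\<dots> \<le> s * (D * r^p) + C * r^p"
      by (intro add_mono mult_mono lb Suc yb) (use \<open>0 \<le> s\<close> in auto)
    also have "\<dots> = (s * D + C) * r^p" by (simp add: algebra_simps)
    also have "\<dots> \<le> (s * D + (r - s) * D) * r^p"
      by (intro mult_right_mono rp) (use CD in auto)
    also have "\<dots> = D * r ^ Suc p" by (simp add: algebra_simps)
    finally show ?case .
  qed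
  then show ?thesis by blast
qed

lemma geo2:
  fixes x y :: "nat \<Rightarrow> complex"
  assumes rec: "\<And>p. x (Suc p) = x p + y p" and "0 \<le> r" "r < 1"
    and yb: "\<And>p. cmod (y p) \<le> C * r^p"
  shows "\<exists>L D. \<forall>p. cmod (x p - L) \<le> D * r^p"
proof -
  have sg: "summable (\<lambda>p. C * r^p)"
    by (rule summable_mult) (use assms in \<open>simp add: summable_geometric\<close>)
  have sy: "summable y" by (rule summable_comparison_test[OF _ sg]) (use yb in auto)
  have xs: "x p = x 0 + sum y {..<p}" for p by (induction p) (simp_all add: rec)
  define L where "L = x 0 + suminf y"
  have "cmod (x p - L) \<le> (C / (1 - r)) * r^p" for p
  proof -
    have syp: "summable (\<lambda>q. y (q + p))" using sy by (rule summable_ignore_initial_segment)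
    have sgp: "summable (\<lambda>q. C * r^(q+p))" using sg by (rule summable_ignore_initial_segment)
    have snp: "summable (\<lambda>q. cmod (y (q + p)))"
      by (rule summable_comparison_test[OF _ sgp]) (use yb in auto)
    have "x p - L = - suminf (\<lambda>q. y (q + p))"
      unfolding L_def xs[of p] using suminf_split_initial_segment[OF sy, of p] by simp
    then have "cmod (x p - L) = cmod (suminf (\<lambda>q. y (q + p)))" by simp
    also have "\<dots> \<le> (\<Sum>q. cmod (y (q + p)))" by (rule summable_norm[OF snp])
    also have "\<dots> \<le> (\<Sum>q. C * r^(q+p))" by (rule suminf_le[OF _ snp sgp]) (use yb in auto)
    also have "(\<Sum>q. C * r^(q+p)) = (C * r^p) * (\<Sum>q. r^q)"
      by (subst suminf_mult[symmetric]) (use assms in \<open>simp_all add: summable_geometric power_add algebra_simps\<close>)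
    also have "\<dots> = (C / (1 - r)) * r^p" using assms by (simp add: suminf_geometric)
    finally show ?thesis .
  qed
  then show ?thesis by blast
qed

lemma c_ge1: "l \<le> k \<Longrightarrow> c_coef l k \<ge> 1"
  unfolding c_coef_def by (rule prod_ge_1) auto

lemma c_nonneg: "c_coef l k \<ge> 0"
proof (cases "l \<le> k")
  case True then show ?thesis using c_ge1[of l k] by simp
next
  case False then show ?thesis using c_zero[of k l] by simp
qed

lemma c_mono: "k \<le> n \<Longrightarrow> c_coef l k \<le> c_coef l n"
proof (cases "l \<le> k")
  case True
  assume "k \<le> n"
  show ?thesis unfolding c_coef_def
    by (rule prod_mono) (use True \<open>k \<le> n\<close> in auto)
next
  case False then show ?thesis using c_zero[of k l] c_nonneg[of l n] by simp
qed

lemma lam_bound: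
  assumes "i \<le> n" "j \<le> n" "l \<le> i \<or> l \<le> j" "dt > 0"
  shows "\<bar>1 - dt * (c_coef l i + c_coef l j) / 2\<bar> \<le> max 0 (max (1 - dt/2) (dt * c_coef l n - 1))"
proof -
  have s1: "c_coef l i + c_coef l j \<ge> 1"
    using assms(3) c_ge1[of l i] c_ge1[of l j] c_nonneg[of l i] c_nonneg[of l j] by auto
  have s2: "c_coef l i + c_coef l j \<le> 2 * c_coef l n"
    using c_mono[OF assms(1), of l] c_mono[OF assms(2), of l] by simp
  have a: "dt * (c_coef l i + c_coef l j) \<ge> dt" using s1 assms(4)
    by (metis mult.right_neutral mult_left_mono less_imp_le)
  have b: "dt * (c_coef l i + c_coef l j) \<le> dt * (2 * c_coef l n)" using s2 assms(4)
    by (simp add: mult_left_mono)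
  show ?thesis using a b by (simp add: abs_le_iff le_max_iff_disj) linarith
qed

lemma P_low_entry: "i < n+1 \<Longrightarrow> k < n+1 \<Longrightarrow> P_low l n $$ (i,k) = (if i = k then (if i < l then 1 else 0) else 0)"
  by (simp add: P_low_def)

lemma P_low_carrier: "P_low l n \<in> carrier_mat (n+1) (n+1)"
  by (simp add: P_low_def)

theorem mainTheorem11:
  fixes l n :: nat and dt :: real and \<rho>0 :: "complex mat"
  assumes "l \<ge> 1" and "dt > 0" and "dt * c_coef l n < 2"
    and "\<rho>0 \<in> carrier_mat (n+1) (n+1)"
  shows "\<exists>\<rho>inf \<in> carrier_mat (n+1) (n+1).
           P_low l n * \<rho>inf * P_low l n = \<rho>inf \<and>
           (\<exists>C r. 0 \<le> r \<and> r < 1 \<and>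
              (\<forall>p i j. i < n+1 \<longrightarrow> j < n+1 \<longrightarrow>
                 cmod (((euler1 l n dt ^^ p) \<rho>0 - \<rho>inf) $$ (i,j)) \<le> C * r ^ p))"
proof -
  define x where "x p i j = ((euler1 l n dt ^^ p) \<rho>0) $$ (i,j)" for p i j
  have car: "(euler1 l n dt ^^ p) \<rho>0 \<in> carrier_mat (n+1) (n+1)" for p
  proof (induction p)
    case 0 show ?case using assms(4) by simp
  next
    case (Suc p) show ?case using euler_carrier[OF Suc.IH] by simp
  qed
  define lam where "lam i j = 1 - dt * (c_coef l i + c_coef l j) / 2" for i j
  define mu where "mu i j = dt * sA l (i+l) * sA l (j+l)" for i j
  have rec: "x (Suc p) i j = complex_of_real (lam i j) * x p i j
      + (if i + l < n+1 \<and> j + l < n+1 then complex_of_real (mu i j) * x p (i+l) (j+l) else 0)"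
    if "i < n+1" "j < n+1" for p i j
    unfolding x_def lam_def mu_def using euler_entry[OF car that, of l dt] by simp
  define r0 where "r0 = max 0 (max (1 - dt/2) (dt * c_coef l n - 1))"
  define r where "r = (1 + r0) / 2"
  have r0: "0 \<le> r0" "r0 < 1" unfolding r0_def using assms(2,3) by auto
  have r: "r0 < r" "r < 1" "0 \<le> r" unfolding r_def using r0 by auto
  have rp: "r^p \<ge> 0" for p using r by simp
  have lamb: "cmod (complex_of_real (lam i j)) \<le> r0" if "i < n+1" "j < n+1" "l \<le> i \<or> l \<le> j" for i j
    unfolding lam_def r0_def norm_of_real using lam_bound[of i n j l dt] that assms(2) by simp
  have high: "\<exists>D. \<forall>p. cmod (x p i j) \<le> D * r^p" if "i < n+1" "j < n+1" "l \<le> i \<or> l \<le> j" for i j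
    using that
  proof (induction "n - i" arbitrary: i j rule: less_induct)
    case less
    show ?case
    proof (cases "i + l < n+1 \<and> j + l < n+1")
      case True
      have "n - (i+l) < n - i" using True assms(1) by linarith
      then obtain D' where D': "\<forall>p. cmod (x p (i+l) (j+l)) \<le> D' * r^p"
        using less.hyps[of "i+l" "j+l"] True by auto
      show ?thesis
      proof (rule geo1[where x = "\<lambda>p. x p i j" and lam = "complex_of_real (lam i j)" and y = "\<lambda>p. complex_of_real (mu i j) * x p (i+l) (j+l)"
            and s = r0 and C = "\<bar>mu i j\<bar> * D'"])
        show "x (Suc p) i j = complex_of_real (lam i j) * x p i j + complex_of_real (mu i j) * x p (i+l) (j+l)" for p
          using rec[OF less.prems(1,2), of p] True by simp
        show "cmod (complex_of_real (mu i j) * x p (i + l) (j + l)) \<le> \<bar>mu i j\<bar> * D' * r ^ p" for p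
          using D' by (simp add: norm_mult mult.assoc mult_left_mono)
      qed (use lamb[OF less.prems] r r0 in auto)
    next
      case False
      show ?thesis
      proof (rule geo1[where x = "\<lambda>p. x p i j" and lam = "complex_of_real (lam i j)" and y = "\<lambda>p. 0" and s = r0 and C = 0])
        show "x (Suc p) i j = complex_of_real (lam i j) * x p i j + 0" for p
          using rec[OF less.prems(1,2), of p] False by auto
      qed (use lamb[OF less.prems] r r0 in auto)
    qed
  qed
  have low: "\<exists>L D. \<forall>p. cmod (x p i j - L) \<le> D * r^p" if "i < l" "j < l" "i < n+1" "j < n+1" for i j
  proof -
    have l1: "lam i j = 1" unfolding lam_def using c_zero[OF that(1)] c_zero[OF that(2)] by simp
    show ?thesis
    proof (cases "i + l < n+1 \<and> j + l < n+1")
      case True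
      then obtain D' where D': "\<forall>p. cmod (x p (i+l) (j+l)) \<le> D' * r^p"
        using high[of "i+l" "j+l"] by auto
      show ?thesis
      proof (rule geo2[where x = "\<lambda>p. x p i j" and y = "\<lambda>p. complex_of_real (mu i j) * x p (i+l) (j+l)" and C = "\<bar>mu i j\<bar> * D'"])
        show "x (Suc p) i j = x p i j + complex_of_real (mu i j) * x p (i+l) (j+l)" for p
          using rec[OF that(3,4), of p] True l1 by simp
        show "cmod (complex_of_real (mu i j) * x p (i + l) (j + l)) \<le> \<bar>mu i j\<bar> * D' * r ^ p" for p
          using D' by (simp add: norm_mult mult.assoc mult_left_mono)
      qed (use r in auto)
    next
      case False
      show ?thesis
      proof (rule geo2[where x = "\<lambda>p. x p i j" and y = "\<lambda>p. 0" and C = 0])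
        show "x (Suc p) i j = x p i j + 0" for p
          using rec[OF that(3,4), of p] False l1 by auto
      qed (use r in auto)
    qed
  qed
  define Lf where "Lf i j = (if i < l \<and> j < l then (SOME L. \<exists>D. \<forall>p. cmod (x p i j - L) \<le> D * r^p) else 0)" for i j
  have ent: "\<exists>D. \<forall>p. cmod (x p i j - Lf i j) \<le> D * r^p" if "i < n+1" "j < n+1" for i j
  proof (cases "i < l \<and> j < l")
    case True
    then show ?thesis unfolding Lf_def using someI_ex[OF low[of i j]] True that by simp
  next
    case False
    then show ?thesis unfolding Lf_def using high[OF that] by auto
  qed
  define S where "S = {0..<n+1} \<times> {0..<n+1}"
  have "\<forall>q\<in>S. \<exists>D. \<forall>p. cmod (x p (fst q) (snd q) - Lf (fst q) (snd q)) \<le> D * r^p"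
    unfolding S_def using ent by auto
  then obtain Df where Df: "\<forall>q\<in>S. \<forall>p. cmod (x p (fst q) (snd q) - Lf (fst q) (snd q)) \<le> Df q * r^p"
    by (metis bchoice)
  define C where "C = (\<Sum>q\<in>S. max 0 (Df q))"
  define \<rho>inf where "\<rho>inf = mat (n+1) (n+1) (\<lambda>(i,j). Lf i j)"
  have rc: "\<rho>inf \<in> carrier_mat (n+1) (n+1)" unfolding \<rho>inf_def by simp
  have bound: "cmod (((euler1 l n dt ^^ p) \<rho>0 - \<rho>inf) $$ (i,j)) \<le> C * r ^ p"
    if "i < n+1" "j < n+1" for p i j
  proof -
    have q: "(i,j) \<in> S" unfolding S_def using that by auto
    have "((euler1 l n dt ^^ p) \<rho>0 - \<rho>inf) $$ (i,j) = x p i j - Lf i j"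
      unfolding x_def using that by (simp add: \<rho>inf_def)
    then have "cmod (((euler1 l n dt ^^ p) \<rho>0 - \<rho>inf) $$ (i,j)) \<le> Df (i,j) * r^p"
      using Df q by auto
    also have "\<dots> \<le> max 0 (Df (i,j)) * r^p" by (rule mult_right_mono) (use rp in auto)
    also have "\<dots> \<le> C * r^p" unfolding C_def
      by (rule mult_right_mono[OF member_le_sum[OF q]]) (use rp S_def in auto)
    finally show ?thesis .
  qed
  have proj: "P_low l n * \<rho>inf * P_low l n = \<rho>inf"
  proof (rule eq_matI)
    fix i j assume ij: "i < dim_row \<rho>inf" "j < dim_col \<rho>inf"
    then have ij': "i < n+1" "j < n+1" using rc by auto
    let ?d = "\<lambda>i. if i < l then (1::complex) else 0"
    have "(P_low l n * \<rho>inf * P_low l n) $$ (i,j) = (P_low l n * \<rho>inf) $$ (i,j) * ?d j"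
      by (rule diag_right[OF P_low_carrier P_low_entry]) (use ij' rc in \<open>auto simp: P_low_def\<close>)
    also have "(P_low l n * \<rho>inf) $$ (i,j) = ?d i * \<rho>inf $$ (i,j)"
      by (rule diag_left[OF P_low_carrier P_low_entry]) (use ij' rc in auto)
    finally show "(P_low l n * \<rho>inf * P_low l n) $$ (i,j) = \<rho>inf $$ (i,j)"
      using ij' by (simp add: \<rho>inf_def Lf_def)
  qed (use rc P_low_carrier in auto)
  show ?thesis
    using rc proj bound r by blast
qed

end
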